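(* On every instance with largeness ratio $\theta$, the set $\chi_k$ of winners selected by the Oracle Mechanism satisfies $F(\chi_k)\ge(\tfrac12-\theta)F^\star$; i.e., the Oracle Mechanism has approximation ratio at least $\tfrac12-\theta$.
   Context: Sellers $S=\{1,\dots,n\}$ each own one indivisible item and have a cost $c_i\ge0$. The buyer's utility is a monotone submodular $F:2^S\to\mathbb R_{\ge0}$, budget $B>0$; $c(T)=\sum_{i\in T}c_i$. $F^\star=\max\{F(T):c(T)\le B\}>0$; the largeness ratio is $\theta=\max_{s}F(\{s\})/F^\star$. Greedy sequence $\chi(F)=\langle x_1,\dots,x_n\rangle$: with $\chi_0=\emptyset$, $\chi_i=\{x_1,\dots,x_i\}$, $x_i$ maximizes $(F(\chi_{i-1}\cup\{s\})-F(\chi_{i-1}))/c_s$ over $s\notin\chi_{i-1}$ (ratio $+\infty$ if $c_s=0$; ties arbitrary); $\partial_i=F(\chi_i)-F(\chi_{i-1})$. Oracle Mechanism (on the costs): compute $F^\star$, construct $\chi(F)$, let $k$ be the largest integer with $F(\chi_k)\le F^\star/2$, and declare $\chi_k$ the set of winners; each winner $x_j$ is paid $2r_{x_j}\partial_j$, where $r_s=B/F^\star_s$ and $F^\star_s$ is the optimum with seller $s$ removed. *)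

theory Defs
  imports Main "HOL-Library.Extended_Real"
begin

definition monotone_set_fn :: "'a set \<Rightarrow> ('a set \<Rightarrow> real) \<Rightarrow> bool" where
  "monotone_set_fn S F \<longleftrightarrow> (\<forall>A B. A \<subseteq> B \<and> B \<subseteq> S \<longrightarrow> F A \<le> F B)"

definition submodular_set_fn :: "'a set \<Rightarrow> ('a set \<Rightarrow> real) \<Rightarrow> bool" where
  "submodular_set_fn S F \<longleftrightarrow>
     (\<forall>A B. A \<subseteq> S \<and> B \<subseteq> S \<longrightarrow> F (A \<union> B) + F (A \<inter> B) \<le> F A + F B)"

definition opt_value :: "'a set \<Rightarrow> ('a \<Rightarrow> real) \<Rightarrow> ('a set \<Rightarrow> real) \<Rightarrow> real \<Rightarrow> real" where
  "opt_value S c F B = Max (F ` {T. T \<subseteq> S \<and> sum c T \<le> B})"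

definition largeness_ratio :: "'a set \<Rightarrow> ('a \<Rightarrow> real) \<Rightarrow> ('a set \<Rightarrow> real) \<Rightarrow> real \<Rightarrow> real" where
  "largeness_ratio S c F B = Max ((\<lambda>s. F {s} / opt_value S c F B) ` S)"

definition greedy_ratio :: "('a \<Rightarrow> real) \<Rightarrow> ('a set \<Rightarrow> real) \<Rightarrow> 'a set \<Rightarrow> 'a \<Rightarrow> ereal" where
  "greedy_ratio c F T s =
     (if c s = 0 then \<infinity> else ereal ((F (T \<union> {s}) - F T) / c s))"

text \<open>xs is a greedy sequence chi(F) (ties broken arbitrarily):
  x_(i+1) = xs ! i maximizes the greedy ratio w.r.t. chi_i = set (take i xs).\<close>
definition greedy_sequence :: "'a set \<Rightarrow> ('a \<Rightarrow> real) \<Rightarrow> ('a set \<Rightarrow> real) \<Rightarrow> 'a list \<Rightarrow> bool" where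
  "greedy_sequence S c F xs \<longleftrightarrow> distinct xs \<and> set xs = S \<and>
     (\<forall>i < length xs. \<forall>s \<in> S - set (take i xs).
        greedy_ratio c F (set (take i xs)) s \<le> greedy_ratio c F (set (take i xs)) (xs ! i))"

end

theory Submission
  imports Defs
begin

theorem lemma17:
  fixes n :: nat and c :: "nat \<Rightarrow> real" and F :: "nat set \<Rightarrow> real" and B :: real
    and xs :: "nat list" and k :: nat
  assumes cost_nonneg: "\<forall>i \<in> {1..n}. c i \<ge> 0"
    and F_nonneg: "\<forall>T. T \<subseteq> {1..n} \<longrightarrow> F T \<ge> 0"
    and F_empty: "F {} = 0"
    and F_mono: "monotone_set_fn {1..n} F"
    and F_submod: "submodular_set_fn {1..n} F"
    and B_pos: "B > 0"
    and opt_pos: "opt_value {1..n} c F B > 0"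
    and greedy: "greedy_sequence {1..n} c F xs"
    and k_le: "k \<le> n"
    and k_ok: "F (set (take k xs)) \<le> opt_value {1..n} c F B / 2"
    and k_max: "\<forall>j. k < j \<and> j \<le> n \<longrightarrow> F (set (take j xs)) > opt_value {1..n} c F B / 2"
  shows "F (set (take k xs)) \<ge> (1/2 - largeness_ratio {1..n} c F B) * opt_value {1..n} c F B"
proof -
  define Ov where "Ov = opt_value {1..n} c F B"
  have dist: "distinct xs" and setxs: "set xs = {1..n}" using greedy unfolding greedy_sequence_def by auto
  have len: "length xs = n" using distinct_card[OF dist] setxs by simp
  have fin: "finite {T. T \<subseteq> {1..n} \<and> sum c T \<le> B}" by (rule finite_subset[of _ "Pow {1..n}"]) auto
  have ne: "{T. T \<subseteq> {1..n} \<and> sum c T \<le> B} \<noteq> {}" using B_pos by (auto intro!: exI[of _ "{}"])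
  have "Ov \<in> F ` {T. T \<subseteq> {1..n} \<and> sum c T \<le> B}"
    unfolding Ov_def opt_value_def using fin ne by (intro Max_in) auto
  then obtain T where T: "T \<subseteq> {1..n}" "Ov = F T" by auto
  have OS: "Ov \<le> F {1..n}" using F_mono T unfolding monotone_set_fn_def by auto
  have kn: "k < n"
  proof (rule ccontr)
    assume "\<not> k < n"
    hence "k = n" using k_le by simp
    hence "set (take k xs) = {1..n}" using len setxs by simp
    thus False using k_ok OS opt_pos unfolding Ov_def by simp
  qed
  define A where "A = set (take k xs)"
  define x where "x = xs ! k"
  have tk: "take (Suc k) xs = take k xs @ [x]" using kn len unfolding x_def by (simp add: take_Suc_conv_app_nth)
  have xS: "x \<in> {1..n}" using kn len setxs unfolding x_def by (metis nth_mem)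
  have "distinct (take (Suc k) xs)" using dist by simp
  hence "distinct (take k xs @ [x])" by (simp only: tk)
  hence xA: "x \<notin> A" unfolding A_def by simp
  have AS: "A \<subseteq> {1..n}" unfolding A_def by (metis set_take_subset setxs)
  have sub: "F (A \<union> {x}) + F (A \<inter> {x}) \<le> F A + F {x}"
    using F_submod AS xS unfolding submodular_set_fn_def
    by (metis empty_subsetI insert_subset)
  have "A \<inter> {x} = {}" using xA by auto
  hence step: "F (A \<union> {x}) \<le> F A + F {x}" using sub F_empty by simp
  have big: "F (A \<union> {x}) > Ov / 2" using k_max[rule_format, of "Suc k"] kn tk
    unfolding A_def Ov_def by (simp add: Un_commute)
  have finS: "finite ((\<lambda>s. F {s} / Ov) ` {1..n})" by simp
  have "F {x} / Ov \<le> largeness_ratio {1..n} c F B"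
    unfolding largeness_ratio_def Ov_def[symmetric] using xS by (intro Max_ge) auto
  hence "F {x} \<le> largeness_ratio {1..n} c F B * Ov" using opt_pos unfolding Ov_def[symmetric]
    by (simp add: divide_le_eq)
  hence "F A \<ge> Ov/2 - largeness_ratio {1..n} c F B * Ov" using step big by linarith
  thus ?thesis unfolding A_def Ov_def by (simp add: algebra_simps)
qed

end
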